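(* Let $F$ be an order continuous Banach lattice and $E$ a closed subspace of $F$. Then the following are equivalent: $E$ is dispersed; $E$ is strictly dispersed; $E$ is weakly dispersed; $E$ is strongly dispersed. In particular, the set of dispersed closed subspaces of $F$ is open in the gap topology.
   Context: Elements $x,y$ are disjoint if $|x|\wedge|y|=0$. $\mathrm{S}_X$ is the unit sphere. $E$ is dispersed if it contains no almost disjoint sequence, i.e. no sequence $(e_n)\subset\mathrm{S}_E$ for which there is a disjoint sequence $(f_n)\subset F$ with $\|f_n-e_n\|\to0$. $E$ is strictly dispersed if there is $\delta>0$ such that no disjoint sequence $(f_n)\subset\mathrm{S}_F$ satisfies $\mathrm{dist}(f_n,E)<\delta$ for all $n$. The un-topology on $F$ has zero neighborhood base $\{f:\||f|\wedge h\|<\varepsilon\}$, $h\in F_+$, $\varepsilon>0$; the una-topology is defined the same way with $h$ ranging over the positive part of the ideal $F^a$ of order continuous elements. $E$ is weakly (resp. strongly) dispersed if some un- (resp. una-) neighborhood of $0_F$ is disjoint from $\mathrm{S}_E$. The gap topology on closed subspaces is given by the metric equal to the Hausdorff distance between unit spheres. *)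

theory Defs
  imports "HOL-Analysis.Analysis" "HOL-Library.Extended_Real"
begin

class banach_lattice = banach + lattice +
  assumes bl_add_mono: "x \<le> y \<Longrightarrow> x + z \<le> y + z"
    and bl_scale_nonneg: "0 \<le> x \<Longrightarrow> 0 \<le> c \<Longrightarrow> 0 \<le> scaleR c x"
    and bl_lattice_norm: "sup x (- x) \<le> sup y (- y) \<Longrightarrow> norm x \<le> norm y"

definition labs :: "'a::banach_lattice \<Rightarrow> 'a" where
  "labs x = sup x (- x)"

definition ldisjoint :: "'a::banach_lattice \<Rightarrow> 'a \<Rightarrow> bool" where
  "ldisjoint x y \<longleftrightarrow> inf (labs x) (labs y) = 0"

definition disjoint_seq :: "(nat \<Rightarrow> 'a::banach_lattice) \<Rightarrow> bool" where
  "disjoint_seq f \<longleftrightarrow> (\<forall>m n. m \<noteq> n \<longrightarrow> ldisjoint (f m) (f n))"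

definition unit_sphere :: "'a::real_normed_vector set \<Rightarrow> 'a set" where
  "unit_sphere E = {x \<in> E. norm x = 1}"

text \<open>Nets decreasing to 0 are represented by their ranges: nonempty downward directed
  sets whose greatest lower bound is 0 (such sets consist of positive elements).
  A decreasing net tends to 0 in norm iff the infimum of the norms is 0, since the norm
  is monotone on positive elements.\<close>

definition is_glb :: "'a::lattice \<Rightarrow> 'a set \<Rightarrow> bool" where
  "is_glb z D \<longleftrightarrow> (\<forall>d\<in>D. z \<le> d) \<and> (\<forall>w. (\<forall>d\<in>D. w \<le> d) \<longrightarrow> w \<le> z)"

definition down_directed :: "'a::lattice set \<Rightarrow> bool" where
  "down_directed D \<longleftrightarrow> D \<noteq> {} \<and> (\<forall>x\<in>D. \<forall>y\<in>D. \<exists>z\<in>D. z \<le> x \<and> z \<le> y)"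

definition decreases_to_zero :: "'a::banach_lattice set \<Rightarrow> bool" where
  "decreases_to_zero D \<longleftrightarrow> down_directed D \<and> is_glb 0 D"

definition order_continuous_BL :: "'a::banach_lattice itself \<Rightarrow> bool" where
  "order_continuous_BL _ \<longleftrightarrow>
     (\<forall>D::'a set. decreases_to_zero D \<longrightarrow> (INF x\<in>D. norm x) = 0)"

definition oc_element :: "'a::banach_lattice \<Rightarrow> bool" where
  "oc_element x \<longleftrightarrow>
     (\<forall>D. decreases_to_zero D \<and> (\<forall>d\<in>D. d \<le> labs x) \<longrightarrow> (INF d\<in>D. norm d) = 0)"

definition almost_disjoint_seq :: "'a::banach_lattice set \<Rightarrow> (nat \<Rightarrow> 'a) \<Rightarrow> bool" where
  "almost_disjoint_seq E e \<longleftrightarrow> (\<forall>n. e n \<in> unit_sphere E) \<and>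
     (\<exists>f. disjoint_seq f \<and> (\<lambda>n. norm (f n - e n)) \<longlonglongrightarrow> 0)"

definition dispersed :: "'a::banach_lattice set \<Rightarrow> bool" where
  "dispersed E \<longleftrightarrow> \<not> (\<exists>e. almost_disjoint_seq E e)"

definition strictly_dispersed :: "'a::banach_lattice set \<Rightarrow> bool" where
  "strictly_dispersed E \<longleftrightarrow> (\<exists>\<delta>>0. \<not> (\<exists>f. disjoint_seq f \<and> (\<forall>n. f n \<in> unit_sphere UNIV)
      \<and> (\<forall>n. infdist (f n) E < \<delta>)))"

definition un_basic_nbhd :: "'a::banach_lattice \<Rightarrow> real \<Rightarrow> 'a set" where
  "un_basic_nbhd h \<epsilon> = {f. norm (inf (labs f) h) < \<epsilon>}"

definition weakly_dispersed :: "'a::banach_lattice set \<Rightarrow> bool" where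
  "weakly_dispersed E \<longleftrightarrow>
     (\<exists>h \<epsilon>. 0 \<le> h \<and> \<epsilon> > 0 \<and> un_basic_nbhd h \<epsilon> \<inter> unit_sphere E = {})"

definition strongly_dispersed :: "'a::banach_lattice set \<Rightarrow> bool" where
  "strongly_dispersed E \<longleftrightarrow>
     (\<exists>h \<epsilon>. 0 \<le> h \<and> oc_element h \<and> \<epsilon> > 0 \<and> un_basic_nbhd h \<epsilon> \<inter> unit_sphere E = {})"

definition hausdorff_dist :: "'a::metric_space set \<Rightarrow> 'a set \<Rightarrow> ereal" where
  "hausdorff_dist A B =
     (if A = {} \<and> B = {} then 0
      else if A = {} \<or> B = {} then \<infinity>
      else max (SUP x\<in>A. ereal (infdist x B)) (SUP y\<in>B. ereal (infdist y A)))"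

definition gap :: "'a::real_normed_vector set \<Rightarrow> 'a set \<Rightarrow> ereal" where
  "gap E G = hausdorff_dist (unit_sphere E) (unit_sphere G)"

definition closed_subspace :: "'a::real_normed_vector set \<Rightarrow> bool" where
  "closed_subspace E \<longleftrightarrow> subspace E \<and> closed E"

definition gap_open :: "'a::real_normed_vector set set \<Rightarrow> bool" where
  "gap_open S \<longleftrightarrow> S \<subseteq> Collect closed_subspace \<and>
     (\<forall>E\<in>S. \<exists>\<epsilon>>0. \<forall>G. closed_subspace G \<and> gap E G < ereal \<epsilon> \<longrightarrow> G \<in> S)"

end

theory Submission
  imports Defs
begin



lemma bl_add_mono_left: "(x::'a::banach_lattice) \<le> y \<Longrightarrow> z + x \<le> z + y"
  using bl_add_mono[of x y z] by (simp add: add.commute)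

lemma bl_le_iff_add: "((x::'a::banach_lattice) + z \<le> y + z) = (x \<le> y)"
  using bl_add_mono[of "x+z" "y+z" "-z"] bl_add_mono[of x y z] by auto

lemma bl_le_diff_iff: "(0 \<le> (y::'a::banach_lattice) - x) = (x \<le> y)"
  using bl_le_iff_add[of 0 x "y - x"] by simp

lemma bl_neg_mono: "(x::'a::banach_lattice) \<le> y \<Longrightarrow> -y \<le> -x"
  using bl_add_mono[of x y "-x-y"] by simp

lemma bl_neg_le_iff: "(-(y::'a::banach_lattice) \<le> -x) = (x \<le> y)"
  using bl_neg_mono[of x y] bl_neg_mono[of "-y" "-x"] by auto

lemma bl_sup_add: "sup a b + (c::'a::banach_lattice) = sup (a + c) (b + c)"
proof (rule antisym)
  have "a + c + (-c) \<le> sup (a+c) (b+c) + (-c)" "b + c + (-c) \<le> sup (a+c) (b+c) + (-c)"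
    by (rule bl_add_mono, simp)+
  then have "sup a b \<le> sup (a+c) (b+c) + (-c)"
    by (simp add: le_supI del: add_uminus_conv_diff)
  then show "sup a b + c \<le> sup (a + c) (b + c)"
    using bl_add_mono[of "sup a b" _ c] by fastforce
  show "sup (a + c) (b + c) \<le> sup a b + c"
    by (simp add: bl_add_mono)
qed

lemma bl_inf_add: "inf a b + (c::'a::banach_lattice) = inf (a + c) (b + c)"
proof (rule antisym)
  show "inf a b + c \<le> inf (a + c) (b + c)" by (simp add: bl_add_mono)
  have "inf (a+c) (b+c) + (-c) \<le> inf a b"
    using bl_add_mono[of "inf (a+c) (b+c)" "a+c" "-c"] bl_add_mono[of "inf (a+c) (b+c)" "b+c" "-c"]
    by (simp add: le_infI)
  then show "inf (a + c) (b + c) \<le> inf a b + c"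
    using bl_add_mono[of _ "inf a b" c] by fastforce
qed

lemma bl_neg_sup: "- sup a (b::'a::banach_lattice) = inf (-a) (-b)"
proof (rule antisym)
  show "- sup a b \<le> inf (- a) (- b)" by (simp add: bl_neg_mono)
  have "- inf (-a) (-b) \<ge> a" "- inf (-a) (-b) \<ge> b"
    using bl_neg_mono[of "inf (-a) (-b)" "-a"] bl_neg_mono[of "inf (-a) (-b)" "-b"] by auto
  then have "sup a b \<le> - inf (-a) (-b)" by simp
  then show "inf (- a) (- b) \<le> - sup a b" using bl_neg_mono by fastforce
qed

lemma bl_neg_inf: "- inf a (b::'a::banach_lattice) = sup (-a) (-b)"
  using bl_neg_sup[of "-a" "-b"] by (metis minus_minus)

lemma bl_sup_plus_inf: "sup a b + inf a (b::'a::banach_lattice) = a + b"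
proof -
  have "sup a b = a + b + - inf a b"
    using bl_neg_inf[of a b] bl_sup_add[of "-a" "-b" "a+b"] by (simp add: sup_commute algebra_simps)
  then show ?thesis by simp
qed

lemma bl_scale_mono: "(x::'a::banach_lattice) \<le> y \<Longrightarrow> 0 \<le> c \<Longrightarrow> c *\<^sub>R x \<le> c *\<^sub>R y"
  using bl_scale_nonneg[of "y - x" c] by (simp add: bl_le_diff_iff scaleR_diff_right)

lemma bl_scale_sup: "0 \<le> c \<Longrightarrow> c *\<^sub>R sup a (b::'a::banach_lattice) = sup (c *\<^sub>R a) (c *\<^sub>R b)"
proof (cases "c = 0")
  case False
  assume c: "0 \<le> c"
  then have cp: "c > 0" using False by simp
  show ?thesis
  proof (rule antisym)
    have "sup a b \<le> (1/c) *\<^sub>R sup (c *\<^sub>R a) (c *\<^sub>R b)"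
      using bl_scale_mono[of "c *\<^sub>R a" "sup (c *\<^sub>R a) (c *\<^sub>R b)" "1/c"]
        bl_scale_mono[of "c *\<^sub>R b" "sup (c *\<^sub>R a) (c *\<^sub>R b)" "1/c"] cp by simp
    then show "c *\<^sub>R sup a b \<le> sup (c *\<^sub>R a) (c *\<^sub>R b)"
      using bl_scale_mono[OF _ c] cp by fastforce
    show "sup (c *\<^sub>R a) (c *\<^sub>R b) \<le> c *\<^sub>R sup a b"
      using bl_scale_mono[OF sup_ge1 c, of a b] bl_scale_mono[OF sup_ge2 c, of b a] by (simp add: le_supI)
  qed
qed simp

lemma bl_scale_inf: "0 \<le> c \<Longrightarrow> c *\<^sub>R inf a (b::'a::banach_lattice) = inf (c *\<^sub>R a) (c *\<^sub>R b)"
  using bl_scale_sup[of c "-a" "-b"] by (metis bl_neg_inf bl_neg_sup minus_minus scaleR_minus_right)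



definition lpos :: "'a::banach_lattice \<Rightarrow> 'a" where "lpos x = sup x 0"
definition lneg :: "'a::banach_lattice \<Rightarrow> 'a" where "lneg x = sup (-x) 0"

lemma labs_ge: "x \<le> labs x" "-x \<le> labs (x::'a::banach_lattice)"
  by (auto simp: labs_def)

lemma labs_nonneg: "0 \<le> labs (x::'a::banach_lattice)"
proof -
  have "x + (-x) \<le> labs x + (-x)" using bl_add_mono[of x "labs x" "-x"] labs_ge(1) by blast
  also have "\<dots> \<le> labs x + labs x" using bl_add_mono_left[of "-x" "labs x" "labs x"] labs_ge(2) by blast
  finally have "x + (-x) \<le> labs x + labs x" .
  then have "0 \<le> (1/2::real) *\<^sub>R (labs x + labs x)" using bl_scale_mono[of 0 "labs x + labs x" "1/2"] by simp
  also have "\<dots> = labs x" by (simp add: scaleR_2[symmetric] del: scaleR_2)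
  finally show ?thesis .
qed

lemma labs_of_nonneg: "0 \<le> (x::'a::banach_lattice) \<Longrightarrow> labs x = x"
proof -
  assume "0 \<le> x"
  then have "-x \<le> x" using bl_neg_mono[of 0 x] by (metis neg_0_equal_iff_equal order.trans)
  then show ?thesis unfolding labs_def by (simp add: sup_absorb1)
qed

lemma labs_minus: "labs (- x) = labs (x::'a::banach_lattice)"
  by (simp add: labs_def sup_commute)

lemma labs_scale_nonneg: "0 \<le> c \<Longrightarrow> labs (c *\<^sub>R x) = c *\<^sub>R labs (x::'a::banach_lattice)"
  by (simp add: labs_def bl_scale_sup)

lemma labs_scale: "labs (c *\<^sub>R x) = \<bar>c\<bar> *\<^sub>R labs (x::'a::banach_lattice)"
proof (cases "c \<ge> 0")
  case True then show ?thesis by (simp add: labs_def bl_scale_sup)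
next
  case False
  have "labs (c *\<^sub>R x) = labs (- ((-c) *\<^sub>R x))" by simp
  also have "\<dots> = labs ((-c) *\<^sub>R x)" by (rule labs_minus)
  finally have "labs (c *\<^sub>R x) = labs ((-c) *\<^sub>R x)" .
  also have "\<dots> = (-c) *\<^sub>R labs x" using False by (intro labs_scale_nonneg) simp
  finally show ?thesis using False by simp
qed

lemma labs_triangle: "labs (x + y) \<le> labs x + labs (y::'a::banach_lattice)"
proof -
  have "x + y \<le> labs x + labs y"
    using bl_add_mono[OF labs_ge(1)[of x], of "y"] bl_add_mono_left[OF labs_ge(1)[of y], of "labs x"]
    by (rule order_trans)
  moreover have "-(x + y) \<le> labs x + labs y"
    using bl_add_mono[OF labs_ge(2)[of x], of "-y"] bl_add_mono_left[OF labs_ge(2)[of y], of "labs x"]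
    by (metis (no_types) minus_add_distrib add.commute order_trans)
  ultimately show ?thesis by (simp add: labs_def)
qed

lemma norm_labs: "norm (labs x) = norm (x::'a::banach_lattice)"
proof -
  have "labs (labs x) = labs x" by (simp add: labs_of_nonneg labs_nonneg)
  then show ?thesis using bl_lattice_norm[of x "labs x"] bl_lattice_norm[of "labs x" x]
    by (simp add: labs_def[symmetric] antisym)
qed

lemma norm_mono_pos: "0 \<le> (a::'a::banach_lattice) \<Longrightarrow> a \<le> b \<Longrightarrow> norm a \<le> norm b"
  using bl_lattice_norm[of a b] labs_of_nonneg[of a] labs_of_nonneg[of b]
  by (simp add: labs_def[symmetric])

lemma labs_le_norm: "labs (a::'a::banach_lattice) \<le> b \<Longrightarrow> norm a \<le> norm b"
  using norm_mono_pos[OF labs_nonneg, of a b] norm_labs[of a] by simp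

lemma labs_zero_iff: "labs (x::'a::banach_lattice) = 0 \<longleftrightarrow> x = 0"
  using norm_labs[of x] by (metis labs_of_nonneg norm_eq_zero order_refl)

lemma lpos_nonneg: "0 \<le> lpos x" and lneg_nonneg: "0 \<le> lneg x"
  by (auto simp: lpos_def lneg_def)

lemma lpos_minus_lneg: "lpos x - lneg x = (x::'a::banach_lattice)"
proof -
  have "lneg x + x = sup 0 x" using bl_sup_add[of "-x" 0 x] by (simp add: lneg_def)
  then show ?thesis by (simp add: lpos_def sup_commute algebra_simps)
qed

lemma lpos_eq: "lpos x = x + lneg (x::'a::banach_lattice)"
  using lpos_minus_lneg[of x] by (simp add: algebra_simps)

lemma lpos_inf_lneg: "inf (lpos x) (lneg x) = (0::'a::banach_lattice)"
proof -
  have "inf (lpos x) (lneg x) = inf (x + lneg x) (0 + lneg x)" by (simp add: lpos_eq)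
  also have "\<dots> = inf x 0 + lneg x" by (simp add: bl_inf_add)
  also have "inf x 0 = - lneg x" unfolding lneg_def using bl_neg_sup[of "-x" 0] by simp
  finally show ?thesis by simp
qed

lemma lpos_plus_lneg: "lpos x + lneg x = labs (x::'a::banach_lattice)"
proof -
  have "lpos x + lneg x = sup (lpos x) (lneg x)"
    using bl_sup_plus_inf[of "lpos x" "lneg x"] lpos_inf_lneg[of x] by simp
  also have "\<dots> = sup (sup x (-x)) 0" by (simp add: lpos_def lneg_def sup_aci)
  also have "\<dots> = labs x" using labs_nonneg[of x] by (simp add: labs_def[symmetric] sup_absorb1)
  finally show ?thesis .
qed

lemma lpos_le_labs: "lpos x \<le> labs (x::'a::banach_lattice)"
  using lpos_plus_lneg[of x] bl_add_mono_left[OF lneg_nonneg, of "lpos x" x] by simp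

lemma lneg_le_labs: "lneg x \<le> labs (x::'a::banach_lattice)"
  using lpos_plus_lneg[of x] bl_add_mono[of 0 "lpos x" "lneg x"] lpos_nonneg[of x] by simp

lemma lpos_mono: "x \<le> y \<Longrightarrow> lpos x \<le> lpos (y::'a::banach_lattice)"
  by (auto simp: lpos_def intro: le_supI1)

lemma lpos_diff: "lpos (a - c) = a - inf a (c::'a::banach_lattice)"
proof -
  have "lpos (a - c) = sup (-c) (-a) + a" using bl_sup_add[of "-c" "-a" a] by (simp add: lpos_def)
  also have "sup (-c) (-a) = - inf a c" by (simp add: bl_neg_inf sup_commute)
  finally show ?thesis by simp
qed

lemma lpos_scale: "0 \<le> c \<Longrightarrow> lpos (c *\<^sub>R x) = c *\<^sub>R lpos (x::'a::banach_lattice)"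
  by (simp add: lpos_def bl_scale_sup)

lemma inf_add_le: "0 \<le> a \<Longrightarrow> 0 \<le> b \<Longrightarrow> 0 \<le> (c::'a::banach_lattice) \<Longrightarrow>
  inf (a + b) c \<le> inf a c + inf b c"
proof -
  assume a: "0 \<le> a" and b: "0 \<le> b" and c: "0 \<le> c"
  define d where "d = inf (a+b) c"
  have "d - inf a c = sup (d - a) (d - c)"
    using bl_sup_add[of "-a" "-c" d] by (simp add: bl_neg_inf[symmetric] algebra_simps)
  also have "\<dots> \<le> b"
  proof (rule sup_least)
    have "d \<le> a + b" by (simp add: d_def)
    then show "d - a \<le> b" using bl_add_mono[of d "a+b" "-a"] by simp
    have "d \<le> c" by (simp add: d_def)
    then show "d - c \<le> b" using bl_add_mono[of d c "-c"] b by simp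
  qed
  finally have 1: "d - inf a c \<le> b" .
  have "d - inf a c \<le> d" using bl_add_mono_left[OF bl_neg_mono[of 0 "inf a c"], of d] a c by simp
  moreover have "d \<le> c" by (simp add: d_def)
  ultimately have "d - inf a c \<le> c" by (rule order.trans)
  with 1 have "d - inf a c \<le> inf b c" by (rule le_infI)
  then have "d - inf a c + inf a c \<le> inf b c + inf a c" by (rule bl_add_mono)
  then have "d \<le> inf b c + inf a c" by simp
  then show ?thesis unfolding d_def by (simp only: add.commute)
qed

lemma inf_add_le2: "0 \<le> a \<Longrightarrow> 0 \<le> b \<Longrightarrow> 0 \<le> (c::'a::banach_lattice) \<Longrightarrow>
  inf c (a + b) \<le> inf c a + b"
proof -
  assume a: "0 \<le> a" and b: "0 \<le> b" and c: "0 \<le> c"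
  have "inf c (a + b) \<le> inf a c + inf b c" using inf_add_le[OF a b c] by (simp add: inf_commute)
  also have "\<dots> \<le> inf c a + b" using bl_add_mono_left[of "inf b c" b "inf a c"] by (simp add: inf_commute)
  finally show ?thesis .
qed

lemma disj_mono: "0 \<le> u \<Longrightarrow> u \<le> p \<Longrightarrow> 0 \<le> v \<Longrightarrow> v \<le> q \<Longrightarrow> inf p q = 0 \<Longrightarrow> inf u (v::'a::banach_lattice) = 0"
proof -
  assume "0 \<le> u" "u \<le> p" "0 \<le> v" "v \<le> q" "inf p q = 0"
  then have "inf u v \<le> inf p q" by (intro inf_mono)
  then have "inf u v \<le> 0" using \<open>inf p q = 0\<close> by simp
  moreover have "0 \<le> inf u v" using \<open>0 \<le> u\<close> \<open>0 \<le> v\<close> by simp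
  ultimately show ?thesis by (rule antisym)
qed

lemma scale_ge_self: "0 \<le> (p::'a::banach_lattice) \<Longrightarrow> 1 \<le> s \<Longrightarrow> p \<le> s *\<^sub>R p"
proof -
  assume "0 \<le> p" "1 \<le> s"
  then have "0 \<le> (s - 1) *\<^sub>R p" by (intro bl_scale_nonneg) auto
  then have "0 \<le> s *\<^sub>R p - p" by (simp add: scaleR_diff_left)
  then show ?thesis by (simp only: bl_le_diff_iff)
qed

lemma lneg_eq: "lneg x = lpos (- (x::'a::banach_lattice))"
  by (simp add: lneg_def lpos_def)

lemma pos_pair_disjoint: "0 \<le> a \<Longrightarrow> 0 \<le> (b::'a::banach_lattice) \<Longrightarrow> 1 \<le> s \<Longrightarrow> s * t = 1 \<Longrightarrow>
   inf (lpos (a - t *\<^sub>R b)) (lpos (b - s *\<^sub>R a)) = 0"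
proof -
  assume s: "1 \<le> s" and st: "s * t = 1"
  define y where "y = a - t *\<^sub>R b"
  have "b - s *\<^sub>R a = s *\<^sub>R (- y)" using st by (simp add: y_def algebra_simps)
  moreover have "lpos (s *\<^sub>R (- y)) = s *\<^sub>R lpos (- y)" using s by (intro lpos_scale) simp
  ultimately have eq: "lpos (b - s *\<^sub>R a) = s *\<^sub>R lneg y" by (simp only: lneg_eq)
  have "inf (lpos y) (s *\<^sub>R lneg y) \<le> inf (s *\<^sub>R lpos y) (s *\<^sub>R lneg y)"
    using scale_ge_self[OF lpos_nonneg s] inf_mono by blast
  also have "\<dots> = s *\<^sub>R inf (lpos y) (lneg y)" using s by (intro bl_scale_inf[symmetric]) simp
  also have "\<dots> = 0" by (simp add: lpos_inf_lneg)
  finally have "inf (lpos y) (s *\<^sub>R lneg y) \<le> 0" .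
  moreover have "0 \<le> inf (lpos y) (s *\<^sub>R lneg y)"
    using s by (simp add: lpos_nonneg bl_scale_nonneg lneg_nonneg)
  ultimately show ?thesis using eq y_def by (simp add: antisym)
qed

lemma cone_closed_seq: "(\<And>n. 0 \<le> X n) \<Longrightarrow> X \<longlonglongrightarrow> x \<Longrightarrow> 0 \<le> (x::'a::banach_lattice)"
proof -
  assume X: "\<And>n. 0 \<le> X n" and lim: "X \<longlonglongrightarrow> x"
  have bound: "norm (lneg x) \<le> norm (X n - x)" for n
  proof -
    have "lneg x \<le> lpos (X n - x)" unfolding lneg_def lpos_def
      using X[of n] bl_add_mono[of 0 "X n" "-x"] by (auto intro: le_supI1 simp: sup_mono)
    also have "\<dots> \<le> labs (X n - x)" by (rule lpos_le_labs)
    finally have "lneg x \<le> labs (X n - x)" .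
    then have "norm (lneg x) \<le> norm (labs (X n - x))" using norm_mono_pos lneg_nonneg by blast
    then show ?thesis by (simp add: norm_labs)
  qed
  have "(\<lambda>n. norm (X n - x)) \<longlonglongrightarrow> 0" using lim by (simp add: LIM_zero tendsto_norm_zero)
  then have "norm (lneg x) \<le> 0"
    using bound by (intro LIMSEQ_le_const[of "\<lambda>n. norm (X n - x)"]) auto
  then have "lneg x = 0" by simp
  then show ?thesis using lpos_minus_lneg[of x] lpos_nonneg[of x] by simp
qed

lemma suminf_nonneg_bl: "(\<And>n. 0 \<le> f n) \<Longrightarrow> summable f \<Longrightarrow> 0 \<le> suminf (f::nat \<Rightarrow> 'a::banach_lattice)"
proof -
  assume f: "\<And>n. 0 \<le> f n" and s: "summable f"
  have "0 \<le> sum f {..<n}" for n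
  proof (induction n)
    case (Suc n)
    have "0 + 0 \<le> sum f {..<n} + 0" using bl_add_mono[OF Suc, of 0] .
    also have "\<dots> \<le> sum f {..<n} + f n" using bl_add_mono_left[OF f[of n]] .
    finally show ?case by simp
  qed simp
  then show ?thesis using cone_closed_seq[OF _ summable_LIMSEQ[OF s]] by blast
qed

lemma sum_nonneg_bl: "(\<And>i. i \<in> A \<Longrightarrow> 0 \<le> f i) \<Longrightarrow> 0 \<le> sum (f::_ \<Rightarrow> 'a::banach_lattice) A"
proof (induction A rule: infinite_finite_induct)
  case (insert x F)
  then have a: "0 \<le> f x" "0 \<le> sum f F" by auto
  have "0 + 0 \<le> f x + 0" using bl_add_mono[OF a(1), of 0] .
  also have "\<dots> \<le> f x + sum f F" using bl_add_mono_left[OF a(2)] .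
  finally show ?case using insert by simp
qed auto

lemma sum_ge_term_bl: "finite A \<Longrightarrow> i \<in> A \<Longrightarrow> (\<And>i. i \<in> A \<Longrightarrow> 0 \<le> f i) \<Longrightarrow> f i \<le> sum (f::_ \<Rightarrow> 'a::banach_lattice) A"
proof -
  assume A: "finite A" "i \<in> A" and f: "\<And>i. i \<in> A \<Longrightarrow> 0 \<le> f i"
  have "sum f A = f i + sum f (A - {i})" using A by (simp add: sum.remove)
  moreover have "0 \<le> sum f (A - {i})" using f by (intro sum_nonneg_bl) auto
  ultimately show ?thesis using bl_add_mono_left[of 0 "sum f (A - {i})" "f i"] by simp
qed

lemma archimedean_bl: "(\<And>k::nat. real k *\<^sub>R w \<le> (h::'a::banach_lattice)) \<Longrightarrow> w \<le> 0"
proof -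
  assume H: "\<And>k::nat. real k *\<^sub>R w \<le> h"
  have h0: "0 \<le> h" using H[of 0] by simp
  have hh: "lpos h = h" using h0 unfolding lpos_def by (rule sup_absorb1)
  have kb: "real k * norm (lpos w) \<le> norm h" for k
  proof -
    have "lpos (real k *\<^sub>R w) \<le> lpos h" using lpos_mono[OF H] .
    moreover have "lpos (real k *\<^sub>R w) = real k *\<^sub>R lpos w" by (rule lpos_scale) simp
    ultimately have "real k *\<^sub>R lpos w \<le> h" using hh by (simp only:)
    then have "norm (real k *\<^sub>R lpos w) \<le> norm h"
      by (rule norm_mono_pos[OF bl_scale_nonneg[OF lpos_nonneg of_nat_0_le_iff]])
    then show ?thesis by (simp only: norm_scaleR abs_of_nat)
  qed
  have "norm (lpos w) = 0"
  proof (rule ccontr)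
    assume nz: "norm (lpos w) \<noteq> 0"
    then have pos: "norm (lpos w) > 0" by simp
    obtain k :: nat where k: "norm h / norm (lpos w) < real k" using reals_Archimedean2 by blast
    have "norm h < real k * norm (lpos w)" using k pos by (simp add: divide_less_eq)
    then show False using kb[of k] by linarith
  qed
  then have "lpos w = 0" by simp
  then have "sup w 0 = 0" by (simp only: lpos_def)
  then show ?thesis by (metis sup_ge1)
qed



lemma disjoint_bounded_null:
  fixes g :: "nat \<Rightarrow> 'a::banach_lattice"
  assumes oc: "order_continuous_BL TYPE('a)"
    and g0: "\<And>n. 0 \<le> g n" and gh: "\<And>n. g n \<le> h"
    and gd: "\<And>m n. m \<noteq> n \<Longrightarrow> inf (g m) (g n) = 0"
  shows "(\<lambda>n. norm (g n)) \<longlonglongrightarrow> 0"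
proof -
  define s where "s n = sum g {..<n}" for n
  have s0: "0 \<le> s n" for n unfolding s_def by (rule sum_nonneg_bl) (simp add: g0)
  have sSuc: "s (Suc n) = s n + g n" for n by (simp add: s_def)
  have sdisj: "inf (s n) (g m) = 0" if "n \<le> m" for n m
    using that
  proof (induction n)
    case 0 then show ?case by (simp add: s_def g0 inf_absorb2 g0 inf.absorb1)
  next
    case (Suc n)
    have "inf (s n + g n) (g m) \<le> inf (s n) (g m) + inf (g n) (g m)"
      by (rule inf_add_le[OF s0 g0 g0])
    also have "\<dots> = 0" using Suc gd[of n m] by simp
    finally have "inf (s (Suc n)) (g m) \<le> 0" by (simp add: sSuc)
    moreover have "0 \<le> inf (s (Suc n)) (g m)" using s0 g0 by simp
    ultimately show ?case by (rule antisym)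
  qed
  have sh: "s n \<le> h" for n
  proof (induction n)
    case 0 then show ?case using g0[of 0] gh[of 0] by (simp add: s_def)
  next
    case (Suc n)
    have "s (Suc n) = sup (s n) (g n)"
      using bl_sup_plus_inf[of "s n" "g n"] sdisj[of n n] by (simp add: sSuc)
    then show ?case using Suc gh[of n] by simp
  qed
  have smono: "s n \<le> s m" if "n \<le> m" for n m
  proof -
    have "s m = s n + sum g {n..<m}" using that unfolding s_def
      by (metis sum.atLeastLessThan_concat le0 atLeast0LessThan)
    moreover have "0 \<le> sum g {n..<m}" by (rule sum_nonneg_bl) (simp add: g0)
    ultimately show ?thesis using bl_add_mono_left[of 0 "sum g {n..<m}" "s n"] by simp
  qed
  have gle: "g m \<le> s (Suc m) - s n" if "n \<le> m" for n m
  proof -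
    have "s (Suc m) - s n = sum g {n..<Suc m}" using that unfolding s_def
      by (metis sum.atLeastLessThan_concat le0 atLeast0LessThan add_diff_cancel_left' le_SucI)
    also have "g m \<le> \<dots>" using that by (intro sum_ge_term_bl) (auto simp: g0)
    finally show ?thesis by simp
  qed
  define D where "D = {u - s n | u n. \<forall>k. s k \<le> u}"
  have dd: "decreases_to_zero D"
    unfolding decreases_to_zero_def down_directed_def is_glb_def
  proof (intro conjI ballI allI impI)
    show "D \<noteq> {}" unfolding D_def using sh by blast
  next
    fix x y assume "x \<in> D" "y \<in> D"
    then obtain u n u' n' where x: "x = u - s n" "\<forall>k. s k \<le> u" and y: "y = u' - s n'" "\<forall>k. s k \<le> u'"
      unfolding D_def by blast
    define z where "z = inf u u' - s (max n n')"
    have "z \<in> D" unfolding D_def z_def using x(2) y(2) by force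
    moreover have "z \<le> x"
    proof -
      have "inf u u' + - s (max n n') \<le> u + - s n"
        using bl_neg_mono[OF smono[of n "max n n'"]] by (meson add_mono_thms_linordered_semiring(1) bl_add_mono bl_add_mono_left inf.cobounded1 order_trans max.cobounded1)
      then show ?thesis by (simp add: z_def x)
    qed
    moreover have "z \<le> y"
    proof -
      have "inf u u' + - s (max n n') \<le> u' + - s n'"
        using bl_neg_mono[OF smono[of n' "max n n'"]] by (meson add_mono_thms_linordered_semiring(1) bl_add_mono bl_add_mono_left inf.cobounded2 order_trans max.cobounded2)
      then show ?thesis by (simp add: z_def y)
    qed
    ultimately show "\<exists>z\<in>D. z \<le> x \<and> z \<le> y" by blast
  next
    fix d assume "d \<in> D"
    then obtain u n where d: "d = u - s n" "\<forall>k. s k \<le> u" unfolding D_def by blast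
    then show "0 \<le> d" by (simp add: bl_le_diff_iff)
  next
    fix w assume w: "\<forall>d\<in>D. w \<le> d"
    have ub: "\<forall>j. s j \<le> h - real k *\<^sub>R w" for k
    proof (induction k)
      case 0 then show ?case using sh by simp
    next
      case (Suc k)
      show ?case
      proof
        fix j
        have "h - real k *\<^sub>R w - s j \<in> D" unfolding D_def using Suc by blast
        then have "w \<le> h - real k *\<^sub>R w - s j" using w by blast
        then have "w + s j \<le> h - real k *\<^sub>R w - s j + s j" by (rule bl_add_mono)
        then have "w + s j \<le> h - real k *\<^sub>R w" by simp
        then have "w + s j + (- w) \<le> h - real k *\<^sub>R w + (- w)"
          by (rule bl_add_mono)
        then show "s j \<le> h - real (Suc k) *\<^sub>R w" by (simp add: algebra_simps)
      qed
    qed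
    have "real k *\<^sub>R w \<le> h" for k
    proof -
      have "0 \<le> h - real k *\<^sub>R w" using ub[of k] by (metis s_def sum.empty lessThan_0)
      then show ?thesis by (simp add: bl_le_diff_iff)
    qed
    then show "w \<le> 0" by (rule archimedean_bl)
  qed
  then have inf0: "(INF x\<in>D. norm x) = 0" using oc unfolding order_continuous_BL_def by blast
  show ?thesis
  proof (rule LIMSEQ_I)
    fix r :: real assume r: "0 < r"
    have "D \<noteq> {}" using dd unfolding decreases_to_zero_def down_directed_def by blast
    then obtain d where dD: "d \<in> D" and dr: "norm d < r"
      using inf0 r by (metis cINF_less_iff bdd_below_def norm_ge_zero image_iff)
    then obtain u n where d: "d = u - s n" "\<forall>k. s k \<le> u" unfolding D_def by blast
    show "\<exists>no. \<forall>m\<ge>no. norm (norm (g m) - 0) < r"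
    proof (intro exI allI impI)
      fix m assume "n \<le> m"
      have "g m \<le> s (Suc m) - s n" using gle \<open>n \<le> m\<close> by blast
      also have "\<dots> \<le> u - s n" using bl_add_mono[of "s (Suc m)" u "- s n"] d(2) by simp
      finally have "norm (g m) \<le> norm d" using d norm_mono_pos g0 by blast
      then show "norm (norm (g m) - 0) < r" using dr by simp
    qed
  qed
qed



lemma infdist_lt_ex: "A \<noteq> {} \<Longrightarrow> infdist x A < d \<Longrightarrow> \<exists>a\<in>A. dist x a < d"
proof -
  assume A: "A \<noteq> {}" and l: "infdist x A < d"
  have "bdd_below ((\<lambda>a. dist x a) ` A)" by (rule bdd_belowI[of _ 0]) auto
  then show ?thesis using A l by (simp add: infdist_def cINF_less_iff)
qed

lemma normalize_close:
  fixes x e :: "'b::real_normed_vector"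
  assumes "norm e = 1" "x \<noteq> 0"
  shows "norm ((1 / norm x) *\<^sub>R x - e) \<le> 2 * norm (x - e)"
proof -
  have eq: "(1 / norm x - 1) * norm x = 1 - norm x" using assms(2) by (simp add: field_simps)
  have "norm ((1 / norm x) *\<^sub>R x - x) = norm ((1 / norm x - 1) *\<^sub>R x)" by (simp add: algebra_simps)
  also have "\<dots> = \<bar>1 / norm x - 1\<bar> * norm x" by simp
  also have "\<dots> = \<bar>(1 / norm x - 1) * norm x\<bar>" by (simp add: abs_mult)
  also have "\<dots> = \<bar>1 - norm x\<bar>" by (simp only: eq)
  also have "\<dots> = \<bar>norm e - norm x\<bar>" using assms(1) by simp
  also have "\<dots> \<le> norm (x - e)" by (metis norm_minus_commute norm_triangle_ineq3)
  finally have 1: "norm ((1 / norm x) *\<^sub>R x - x) \<le> norm (x - e)" .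
  have "norm ((1 / norm x) *\<^sub>R x - e) \<le> norm ((1 / norm x) *\<^sub>R x - x) + norm (x - e)"
    by (metis norm_triangle_ineq diff_add_cancel add_diff_eq)
  with 1 show ?thesis by simp
qed

lemma ldisjoint_scale:
  fixes x y :: "'a::banach_lattice"
  assumes "ldisjoint x y"
  shows "ldisjoint (c *\<^sub>R x) (c' *\<^sub>R y)"
proof -
  define M where "M = \<bar>c\<bar> + \<bar>c'\<bar>"
  have M: "\<bar>c\<bar> \<le> M" "\<bar>c'\<bar> \<le> M" "0 \<le> M" by (auto simp: M_def)
  have le: "\<bar>r\<bar> *\<^sub>R a \<le> M *\<^sub>R a" if "0 \<le> a" "\<bar>r\<bar> \<le> M" for r and a :: 'a
  proof -
    have "0 \<le> (M - \<bar>r\<bar>) *\<^sub>R a" using that by (intro bl_scale_nonneg) auto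
    then have "0 \<le> M *\<^sub>R a - \<bar>r\<bar> *\<^sub>R a" by (simp add: scaleR_diff_left)
    then show ?thesis by (simp only: bl_le_diff_iff)
  qed
  have "inf (M *\<^sub>R labs x) (M *\<^sub>R labs y) = M *\<^sub>R inf (labs x) (labs y)"
    using M(3) by (rule bl_scale_inf[symmetric])
  also have "\<dots> = 0" using assms by (simp add: ldisjoint_def)
  finally have "inf (M *\<^sub>R labs x) (M *\<^sub>R labs y) = 0" .
  then show ?thesis unfolding ldisjoint_def labs_scale
    by (rule disj_mono[rotated 4]) (auto intro!: le bl_scale_nonneg labs_nonneg M)
qed

lemma strictly_imp_dispersed:
  fixes E :: "'a::banach_lattice set"
  assumes "strictly_dispersed E"
  shows "dispersed E"
proof (unfold dispersed_def, rule notI)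
  assume "\<exists>e. almost_disjoint_seq E e"
  then obtain e f where eS: "\<And>n. e n \<in> unit_sphere E" and fd: "disjoint_seq f"
    and lim: "(\<lambda>n. norm (f n - e n)) \<longlonglongrightarrow> 0"
    unfolding almost_disjoint_seq_def by blast
  obtain \<delta> where d: "\<delta> > 0" and nd: "\<not> (\<exists>f. disjoint_seq f \<and> (\<forall>n. f n \<in> unit_sphere UNIV)
      \<and> (\<forall>n. infdist (f n) E < \<delta>))"
    using assms unfolding strictly_dispersed_def by blast
  define r where "r = min (1/2) (\<delta>/3)"
  have r: "r > 0" using d by (simp add: r_def)
  obtain N where N0: "\<forall>n\<ge>N. norm (norm (f n - e n) - 0) < r"
    using LIMSEQ_D[OF lim r] by blast
  have N: "norm (f n - e n) < r" if "n \<ge> N" for n using N0 that by simp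
  define F where "F k = (1 / norm (f (k + N))) *\<^sub>R f (k + N)" for k
  have en: "norm (e n) = 1" "e n \<in> E" for n using eS[of n] by (auto simp: unit_sphere_def)
  have fnz: "f (k + N) \<noteq> 0" for k
  proof
    assume "f (k + N) = 0"
    then have "norm (f (k+N) - e (k+N)) = 1" using en by simp
    moreover have "r \<le> 1/2" by (simp add: r_def)
    ultimately show False using N[of "k+N"] by simp
  qed
  have "disjoint_seq F" using fd unfolding disjoint_seq_def F_def
    by (auto intro: ldisjoint_scale)
  moreover have "\<forall>n. F n \<in> unit_sphere UNIV" using fnz by (simp add: F_def unit_sphere_def)
  moreover have "\<forall>n. infdist (F n) E < \<delta>"
  proof
    fix n
    have "infdist (F n) E \<le> dist (F n) (e (n + N))" using en by (intro infdist_le) auto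
    also have "\<dots> = norm (F n - e (n + N))" by (simp add: dist_norm)
    also have "\<dots> \<le> 2 * norm (f (n + N) - e (n + N))" unfolding F_def using en fnz by (intro normalize_close) auto
    also have "\<dots> < 2 * r" using N[of "n+N"] by simp
    also have "\<dots> < \<delta>" using d by (simp add: r_def)
    finally show "infdist (F n) E < \<delta>" .
  qed
  ultimately show False using nd by blast
qed

lemma inf_labs_close:
  fixes e f h :: "'a::banach_lattice"
  assumes "0 \<le> h"
  shows "norm (inf (labs e) h) \<le> norm (inf (labs f) h) + norm (e - f)"
proof -
  have "labs e \<le> labs f + labs (e - f)" using labs_triangle[of f "e - f"] by simp
  then have "inf (labs e) h \<le> inf (labs f + labs (e - f)) h" by (rule inf_mono) simp
  also have "\<dots> \<le> inf (labs f) h + inf (labs (e - f)) h"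
    by (rule inf_add_le[OF labs_nonneg labs_nonneg assms])
  also have "\<dots> \<le> inf (labs f) h + labs (e - f)" by (rule bl_add_mono_left) simp
  finally have 1: "inf (labs e) h \<le> inf (labs f) h + labs (e - f)" .
  have "norm (inf (labs e) h) \<le> norm (inf (labs f) h + labs (e - f))"
    by (rule norm_mono_pos[OF _ 1]) (simp add: labs_nonneg assms)
  also have "\<dots> \<le> norm (inf (labs f) h) + norm (e - f)"
    using norm_triangle_ineq[of "inf (labs f) h" "labs (e - f)"] by (simp add: norm_labs)
  finally show ?thesis .
qed

lemma weakly_imp_strictly:
  fixes E :: "'a::banach_lattice set"
  assumes oc: "order_continuous_BL TYPE('a)" and sub: "subspace E"
    and w: "weakly_dispersed E"
  shows "strictly_dispersed E"
proof -
  obtain h \<epsilon> where h: "0 \<le> h" and eps: "\<epsilon> > 0" and disj: "un_basic_nbhd h \<epsilon> \<inter> unit_sphere E = {}"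
    using w unfolding weakly_dispersed_def by blast
  have big: "\<epsilon> \<le> norm (inf (labs e) h)" if "e \<in> unit_sphere E" for e
  proof (rule ccontr)
    assume "\<not> \<epsilon> \<le> norm (inf (labs e) h)"
    then have "e \<in> un_basic_nbhd h \<epsilon>" unfolding un_basic_nbhd_def by simp
    then show False using disj that by blast
  qed
  define \<delta> where "\<delta> = min (1/2) (\<epsilon>/4)"
  have dpos: "\<delta> > 0" using eps by (simp add: \<delta>_def)
  show ?thesis unfolding strictly_dispersed_def
  proof (intro exI conjI notI)
    show "\<delta> > 0" by (rule dpos)
    assume "\<exists>f. disjoint_seq f \<and> (\<forall>n. f n \<in> unit_sphere UNIV) \<and> (\<forall>n. infdist (f n) E < \<delta>)"
    then obtain f where fd: "disjoint_seq f" and fu: "\<And>n. norm (f n) = 1"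
      and fi: "\<And>n. infdist (f n) E < \<delta>" unfolding unit_sphere_def by blast
    have E0: "E \<noteq> {}" using sub subspace_0 by blast
    have lower: "\<epsilon> / 2 \<le> norm (inf (labs (f n)) h)" for n
    proof -
      obtain a where a: "a \<in> E" "dist (f n) a < \<delta>" using infdist_lt_ex[OF E0 fi[of n]] by blast
      have an: "norm (a - f n) < \<delta>" using a(2) by (simp add: dist_norm norm_minus_commute)
      have anz: "a \<noteq> 0"
      proof
        assume "a = 0" then have "norm (f n) < \<delta>" using an by simp
        then show False using fu[of n] by (simp add: \<delta>_def)
      qed
      define e where "e = (1 / norm a) *\<^sub>R a"
      have eE: "e \<in> unit_sphere E" using anz a(1) sub by (simp add: e_def unit_sphere_def subspace_scale)
      have "norm (e - f n) \<le> 2 * norm (a - f n)" unfolding e_def using fu anz by (rule normalize_close)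
      also have "\<dots> \<le> \<epsilon>/2" using an by (simp add: \<delta>_def)
      finally have "norm (e - f n) \<le> \<epsilon>/2" .
      moreover have "\<epsilon> \<le> norm (inf (labs (f n)) h) + norm (e - f n)"
        using big[OF eE] inf_labs_close[OF h, of e "f n"] by linarith
      ultimately show ?thesis by linarith
    qed
    have "(\<lambda>n. norm (inf (labs (f n)) h)) \<longlonglongrightarrow> 0"
    proof (rule disjoint_bounded_null[OF oc])
      show "0 \<le> inf (labs (f n)) h" for n using h by (simp add: labs_nonneg)
      show "inf (labs (f n)) h \<le> h" for n by simp
      show "inf (inf (labs (f m)) h) (inf (labs (f n)) h) = 0" if "m \<noteq> n" for m n
      proof -
        have "inf (labs (f m)) (labs (f n)) = 0" using fd that unfolding disjoint_seq_def ldisjoint_def by blast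
        moreover have "0 \<le> inf (labs (f m)) h" "0 \<le> inf (labs (f n)) h" using h by (simp_all add: labs_nonneg)
        ultimately show ?thesis using disj_mono[OF _ inf_le1 _ inf_le1] by blast
      qed
    qed
    from LIMSEQ_D[OF this, of "\<epsilon>/2"] obtain N where
      "\<forall>n\<ge>N. norm (norm (inf (labs (f n)) h) - 0) < \<epsilon>/2" using eps by auto
    then have "norm (inf (labs (f N)) h) < \<epsilon>/2" by auto
    with lower[of N] show False by linarith
  qed
qed

lemma weakly_iff_strongly:
  fixes E :: "'a::banach_lattice set"
  assumes oc: "order_continuous_BL TYPE('a)"
  shows "weakly_dispersed E \<longleftrightarrow> strongly_dispersed E"
proof -
  have "oc_element h" for h :: 'a
    using oc unfolding oc_element_def order_continuous_BL_def by blast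
  then show ?thesis unfolding weakly_dispersed_def strongly_dispersed_def by blast
qed



lemma scale_pos_le: "0 \<le> (p::'a::banach_lattice) \<Longrightarrow> p \<le> q \<Longrightarrow> 0 \<le> c \<Longrightarrow> c *\<^sub>R p \<le> c *\<^sub>R q"
  by (rule bl_scale_mono)

lemma not_weakly_imp_not_dispersed:
  fixes E :: "'a::banach_lattice set"
  assumes nw: "\<not> weakly_dispersed E"
  shows "\<not> dispersed E"
proof -
  have ex: "\<exists>e. e \<in> unit_sphere E \<and> norm (inf (labs e) h) < \<epsilon>" if "0 \<le> h" "\<epsilon> > 0" for h \<epsilon>
    using nw that unfolding weakly_dispersed_def un_basic_nbhd_def by blast
  define pick where "pick h \<epsilon> = (SOME e. e \<in> unit_sphere E \<and> norm (inf (labs e) h) < \<epsilon>)" for h \<epsilon>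
  have pick: "pick h \<epsilon> \<in> unit_sphere E \<and> norm (inf (labs (pick h \<epsilon>)) h) < \<epsilon>" if "0 \<le> h" "\<epsilon> > 0" for h \<epsilon>
    unfolding pick_def by (rule someI_ex[OF ex[OF that]])
  define S where "S = rec_nat (0::'a) (\<lambda>k s. s + labs (pick ((2::real)^k *\<^sub>R s) ((1/2)^k)))"
  have S0: "S 0 = 0" and SSuc: "S (Suc k) = S k + labs (pick ((2::real)^k *\<^sub>R S k) ((1/2)^k))" for k
    by (simp_all add: S_def)
  define e where "e k = pick ((2::real)^k *\<^sub>R S k) ((1/2)^k)" for k
  define x where "x k = labs (e k)" for k
  have x0: "0 \<le> x k" for k by (simp add: x_def labs_nonneg)
  have Ssum: "S k = sum x {..<k}" for k by (induction k) (simp_all add: S0 SSuc x_def e_def)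
  have Snn: "0 \<le> S k" for k unfolding Ssum by (rule sum_nonneg_bl) (simp add: x0)
  define A where "A k = (2::real)^k *\<^sub>R S k" for k
  have A0: "0 \<le> A k" for k unfolding A_def by (rule bl_scale_nonneg[OF Snn]) simp
  have epick: "e k \<in> unit_sphere E \<and> norm (inf (x k) (A k)) < (1/2)^k" for k
    unfolding e_def x_def A_def by (rule pick) (auto intro!: bl_scale_nonneg Snn)
  then have eS: "e k \<in> unit_sphere E" and xA: "norm (inf (x k) (A k)) < (1/2)^k" for k by auto
  have xn: "norm (x k) = 1" for k using eS[of k] by (simp add: x_def norm_labs unit_sphere_def)
  define T where "T j m = ((1/2::real)^(m+j+1)) *\<^sub>R x (m+j+1)" for j m
  have Tnorm: "norm (T j m) = (1/2)^(j+1) * (1/2)^m" for j m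
    by (simp add: T_def xn power_add)
  have Tsn: "summable (\<lambda>m. norm (T j m))" for j
    unfolding Tnorm by (intro summable_mult summable_geometric) simp
  have Ts: "summable (T j)" for j by (rule summable_norm_cancel[OF Tsn])
  have T0: "0 \<le> T j m" for j m unfolding T_def by (rule bl_scale_nonneg[OF x0]) simp
  define B where "B j = suminf (T j)" for j
  have Bnorm: "norm (B j) \<le> (1/2)^j" for j
  proof -
    have "norm (B j) \<le> (\<Sum>m. norm (T j m))" unfolding B_def by (rule summable_norm[OF Tsn])
    also have "\<dots> = (1/2)^(j+1) * (\<Sum>m. (1/2::real)^m)" unfolding Tnorm
      by (rule suminf_mult) (simp add: summable_geometric)
    also have "\<dots> = (1/2)^j" by (simp add: suminf_geometric)
    finally show ?thesis .
  qed
  have B0: "0 \<le> B j" for j unfolding B_def by (rule suminf_nonneg_bl[OF T0 Ts])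
  have Bge: "(1/2::real)^l *\<^sub>R x l \<le> B j" if "j < l" for j l
  proof -
    define i where "i = l - j - 1"
    have li: "l = i + j + 1" using that by (simp add: i_def)
    have "B j = (\<Sum>m. T j (m + Suc i)) + sum (T j) {..<Suc i}"
      unfolding B_def by (rule suminf_split_initial_segment[OF Ts])
    moreover have "0 \<le> (\<Sum>m. T j (m + Suc i))"
      by (rule suminf_nonneg_bl[OF T0 summable_ignore_initial_segment[OF Ts]])
    moreover have "T j i \<le> sum (T j) {..<Suc i}" by (rule sum_ge_term_bl) (auto simp: T0)
    ultimately have "T j i \<le> B j"
      using bl_add_mono[of 0 "(\<Sum>m. T j (m + Suc i))" "sum (T j) {..<Suc i}"]
      by (metis add.commute add_0 order_trans)
    then show ?thesis by (simp add: T_def li)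
  qed
  have Age: "(2::real)^l *\<^sub>R x j \<le> A l" if "j < l" for j l
  proof -
    have "x j \<le> S l" unfolding Ssum using that by (intro sum_ge_term_bl) (auto simp: x0)
    then show ?thesis unfolding A_def by (rule bl_scale_mono) simp
  qed
  define c where "c j = A j + B j" for j
  have c0: "0 \<le> c j" for j using bl_add_mono[OF A0, of "B j"] B0[of j] unfolding c_def
    by (metis add_0 order_trans)
  define d where "d j = lpos (x j - c j)" for j
  define f where "f j = lpos (lpos (e j) - c j) - lpos (lneg (e j) - c j)" for j
  have fd: "labs (f j) \<le> 2 *\<^sub>R d j" for j
  proof -
    have "labs (f j) \<le> labs (lpos (lpos (e j) - c j)) + labs (- lpos (lneg (e j) - c j))"
      unfolding f_def using labs_triangle by (metis diff_conv_add_uminus)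
    also have "\<dots> = lpos (lpos (e j) - c j) + lpos (lneg (e j) - c j)"
      by (simp add: labs_minus labs_of_nonneg lpos_nonneg)
    also have "\<dots> \<le> d j + d j"
    proof -
      have 1: "lpos (lpos (e j) - c j) \<le> d j" unfolding d_def x_def
        by (rule lpos_mono) (use bl_add_mono[OF lpos_le_labs[of "e j"], of "- c j"] in simp)
      have 2: "lpos (lneg (e j) - c j) \<le> d j" unfolding d_def x_def
        by (rule lpos_mono) (use bl_add_mono[OF lneg_le_labs[of "e j"], of "- c j"] in simp)
      show ?thesis using bl_add_mono[OF 1, of "lpos (lneg (e j) - c j)"] bl_add_mono_left[OF 2, of "d j"]
        by (rule order_trans)
    qed
    also have "\<dots> = 2 *\<^sub>R d j" by (simp add: scaleR_2)
    finally show ?thesis .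
  qed
  have ddisj: "inf (d j) (d l) = 0" if "j < l" for j l
  proof -
    have p: "d j \<le> lpos (x j - (1/2::real)^l *\<^sub>R x l)" unfolding d_def
    proof (rule lpos_mono)
      have "0 + B j \<le> A j + B j" using A0[of j] by (rule bl_add_mono)
      then have "B j \<le> c j" unfolding c_def by simp
      then have "(1/2::real)^l *\<^sub>R x l \<le> c j" using Bge[OF that] by (rule order.trans[rotated])
      then have "x j + - c j \<le> x j + - ((1/2::real)^l *\<^sub>R x l)" by (intro bl_add_mono_left bl_neg_mono)
      then show "x j - c j \<le> x j - (1/2::real)^l *\<^sub>R x l" by (simp only: diff_conv_add_uminus)
    qed
    have q: "d l \<le> lpos (x l - (2::real)^l *\<^sub>R x j)" unfolding d_def
    proof (rule lpos_mono)
      have "A l + 0 \<le> A l + B l" using B0[of l] by (rule bl_add_mono_left)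
      then have "A l \<le> c l" unfolding c_def by simp
      then have "(2::real)^l *\<^sub>R x j \<le> c l" using Age[OF that] by (rule order.trans[rotated])
      then have "x l + - c l \<le> x l + - ((2::real)^l *\<^sub>R x j)" by (intro bl_add_mono_left bl_neg_mono)
      then show "x l - c l \<le> x l - (2::real)^l *\<^sub>R x j" by (simp only: diff_conv_add_uminus)
    qed
    have "inf (lpos (x j - (1/2::real)^l *\<^sub>R x l)) (lpos (x l - (2::real)^l *\<^sub>R x j)) = 0"
      by (rule pos_pair_disjoint[OF x0 x0]) (simp_all add: power_one_over)
    moreover have "0 \<le> d j" "0 \<le> d l" by (simp_all only: d_def lpos_nonneg)
    ultimately show ?thesis using disj_mono[OF _ p _ q] by blast
  qed
  have fdisj: "ldisjoint (f j) (f l)" if "j < l" for j l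
  proof -
    have "inf (2 *\<^sub>R d j) (2 *\<^sub>R d l) = (2::real) *\<^sub>R inf (d j) (d l)" by (rule bl_scale_inf[symmetric]) simp
    also have "\<dots> = 0" using ddisj[OF that] by simp
    finally have "inf (2 *\<^sub>R d j) (2 *\<^sub>R d l) = 0" .
    then show ?thesis unfolding ldisjoint_def using fd
      by (intro disj_mono[OF labs_nonneg fd labs_nonneg fd])
  qed
  have "disjoint_seq f" unfolding disjoint_seq_def
  proof (intro allI impI)
    fix m n :: nat assume "m \<noteq> n"
    then show "ldisjoint (f m) (f n)"
      using fdisj[of m n] fdisj[of n m] by (cases "m < n") (auto simp: ldisjoint_def inf_commute)
  qed
  moreover have "(\<lambda>n. norm (f n - e n)) \<longlonglongrightarrow> 0"
  proof -
    have bound: "norm (f j - e j) \<le> 4 * (1/2)^j" for j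
    proof -
      have ee: "e j = lpos (e j) - lneg (e j)" by (simp add: lpos_minus_lneg)
      have "e j - f j = inf (lpos (e j)) (c j) - inf (lneg (e j)) (c j)"
        by (subst (1) ee) (simp add: f_def lpos_diff algebra_simps)
      then have t1: "norm (f j - e j) \<le> norm (inf (lpos (e j)) (c j)) + norm (inf (lneg (e j)) (c j))"
        by (metis norm_minus_commute norm_triangle_ineq4)
      have t2: "norm (inf (lpos (e j)) (c j)) \<le> norm (inf (x j) (c j))"
        by (rule norm_mono_pos) (auto simp: lpos_nonneg c0 x_def lpos_le_labs intro: le_infI1)
      have t3: "norm (inf (lneg (e j)) (c j)) \<le> norm (inf (x j) (c j))"
        by (rule norm_mono_pos) (auto simp: lneg_nonneg c0 x_def lneg_le_labs intro: le_infI1)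
      have t4: "norm (inf (x j) (c j)) \<le> norm (inf (x j) (A j)) + norm (B j)"
      proof -
        have "inf (x j) (c j) \<le> inf (x j) (A j) + B j" unfolding c_def by (rule inf_add_le2[OF A0 B0 x0])
        then have "norm (inf (x j) (c j)) \<le> norm (inf (x j) (A j) + B j)"
          by (rule norm_mono_pos[rotated]) (simp add: x0 c0)
        moreover have "norm (inf (x j) (A j) + B j) \<le> norm (inf (x j) (A j)) + norm (B j)"
          by (rule norm_triangle_ineq)
        ultimately show ?thesis by linarith
      qed
      show ?thesis using t1 t2 t3 t4 xA[of j] Bnorm[of j] by linarith
    qed
    have h2: "norm (1/2::real) < 1" by simp
    have lim4: "(\<lambda>j. 4 * (1/2::real)^j) \<longlonglongrightarrow> 0"
      by (rule tendsto_mult_right_zero[OF LIMSEQ_power_zero[OF h2]])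
    have bnd: "\<forall>j. norm (norm (f j - e j)) \<le> 4 * (1/2::real)^j" using bound by simp
    show ?thesis
      by (rule Lim_null_comparison[of "\<lambda>j. norm (f j - e j)" "\<lambda>j. 4 * (1/2::real)^j", OF always_eventually[OF bnd] lim4])
  qed
  ultimately have "almost_disjoint_seq E e" unfolding almost_disjoint_seq_def using eS by blast
  then show ?thesis unfolding dispersed_def by blast
qed



lemma dispersed_iff_strictly:
  fixes E :: "'a::banach_lattice set"
  assumes oc: "order_continuous_BL TYPE('a)" and cs: "closed_subspace E"
  shows "dispersed E \<longleftrightarrow> strictly_dispersed E"
    and "dispersed E \<longleftrightarrow> weakly_dispersed E"
proof -
  have sub: "subspace E" using cs by (simp add: closed_subspace_def)
  have 1: "dispersed E \<Longrightarrow> weakly_dispersed E" using not_weakly_imp_not_dispersed by blast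
  have 2: "weakly_dispersed E \<Longrightarrow> strictly_dispersed E" using weakly_imp_strictly[OF oc sub] by blast
  have 3: "strictly_dispersed E \<Longrightarrow> dispersed E" by (rule strictly_imp_dispersed)
  show "dispersed E \<longleftrightarrow> strictly_dispersed E" using 1 2 3 by blast
  show "dispersed E \<longleftrightarrow> weakly_dispersed E" using 1 2 3 by blast
qed

lemma gap_open_dispersed:
  assumes oc: "order_continuous_BL TYPE('a::banach_lattice)"
  shows "gap_open {G :: 'a set. closed_subspace G \<and> dispersed G}"
  unfolding gap_open_def
proof (intro conjI ballI)
  show "{G :: 'a set. closed_subspace G \<and> dispersed G} \<subseteq> Collect closed_subspace" by blast
  fix E :: "'a set" assume "E \<in> {G. closed_subspace G \<and> dispersed G}"
  then have cs: "closed_subspace E" and dE: "dispersed E" by auto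
  then have "strictly_dispersed E" using dispersed_iff_strictly[OF oc cs] by blast
  then obtain \<delta> where d: "\<delta> > 0" and nd: "\<not> (\<exists>f. disjoint_seq f \<and> (\<forall>n. f n \<in> unit_sphere UNIV)
      \<and> (\<forall>n. infdist (f n) E < \<delta>))"
    unfolding strictly_dispersed_def by blast
  define \<delta>' where "\<delta>' = min \<delta> 1"
  have d': "0 < \<delta>'" "\<delta>' \<le> \<delta>" "\<delta>' \<le> 1" using d by (auto simp: \<delta>'_def)
  show "\<exists>\<epsilon>>0. \<forall>G. closed_subspace G \<and> gap E G < ereal \<epsilon> \<longrightarrow> G \<in> {G. closed_subspace G \<and> dispersed G}"
  proof (intro exI[of _ "\<delta>'/4"] conjI allI impI)
    show "0 < \<delta>'/4" using d' by simp
    fix G :: "'a set" assume G: "closed_subspace G \<and> gap E G < ereal (\<delta>'/4)"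
    then have csG: "closed_subspace G" and gG: "gap E G < ereal (\<delta>'/4)" by auto
    have subG: "subspace G" using csG by (simp add: closed_subspace_def)
    have "strictly_dispersed G" unfolding strictly_dispersed_def
    proof (intro exI[of _ "\<delta>'/4"] conjI notI)
      show "0 < \<delta>'/4" using d' by simp
      assume "\<exists>f. disjoint_seq f \<and> (\<forall>n. f n \<in> unit_sphere UNIV) \<and> (\<forall>n. infdist (f n) G < \<delta>'/4)"
      then obtain f where fd: "disjoint_seq f" and fu: "\<forall>n. f n \<in> unit_sphere UNIV"
        and fi: "\<And>n. infdist (f n) G < \<delta>'/4" by blast
      have G0: "G \<noteq> {}" using subG subspace_0 by blast
      have "infdist (f n) E < \<delta>" for n
      proof -
        have fn: "norm (f n) = 1" using fu by (simp add: unit_sphere_def)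
        obtain g where g: "g \<in> G" "dist (f n) g < \<delta>'/4" using infdist_lt_ex[OF G0 fi[of n]] by blast
        have gn: "norm (g - f n) < \<delta>'/4" using g(2) by (simp add: dist_norm norm_minus_commute)
        have gnz: "g \<noteq> 0"
        proof
          assume "g = 0" then show False using gn fn d' by simp
        qed
        define gh where "gh = (1 / norm g) *\<^sub>R g"
        have ghS: "gh \<in> unit_sphere G" using gnz g(1) subG by (simp add: gh_def unit_sphere_def subspace_scale)
        have ghc: "norm (gh - f n) \<le> 2 * norm (g - f n)" unfolding gh_def using fn gnz by (rule normalize_close)
        have SE: "unit_sphere E \<noteq> {}"
        proof
          assume "unit_sphere E = {}"
          then have "gap E G = \<infinity>" using ghS by (auto simp: gap_def hausdorff_dist_def)
          then show False using gG by simp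
        qed
        have "ereal (infdist gh (unit_sphere E)) \<le> (SUP y\<in>unit_sphere G. ereal (infdist y (unit_sphere E)))"
          using ghS by (rule SUP_upper)
        also have "\<dots> \<le> gap E G" using SE ghS by (auto simp: gap_def hausdorff_dist_def)
        also have "\<dots> < ereal (\<delta>'/4)" by (rule gG)
        finally have "infdist gh (unit_sphere E) < \<delta>'/4" by simp
        then obtain e where e: "e \<in> unit_sphere E" "dist gh e < \<delta>'/4"
          using infdist_lt_ex[OF SE] by blast
        have eE: "e \<in> E" using e(1) by (simp add: unit_sphere_def)
        have "infdist (f n) E \<le> dist (f n) e" by (rule infdist_le[OF eE])
        also have "\<dots> \<le> dist (f n) gh + dist gh e" by (rule dist_triangle)
        also have "dist (f n) gh = norm (gh - f n)" by (simp add: dist_norm norm_minus_commute)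
        finally have "infdist (f n) E \<le> norm (gh - f n) + dist gh e" .
        then show ?thesis using ghc gn e(2) d' by linarith
      qed
      then show False using nd fd fu by blast
    qed
    then have "dispersed G" by (rule strictly_imp_dispersed)
    then show "G \<in> {G. closed_subspace G \<and> dispersed G}" using csG by blast
  qed
qed

theorem theorem4p5:
  fixes E :: "'a::banach_lattice set"
  assumes "order_continuous_BL TYPE('a)"
    and "closed_subspace E"
  shows "(dispersed E \<longleftrightarrow> strictly_dispersed E)
       \<and> (dispersed E \<longleftrightarrow> weakly_dispersed E)
       \<and> (dispersed E \<longleftrightarrow> strongly_dispersed E)
       \<and> gap_open {G :: 'a set. closed_subspace G \<and> dispersed G}"
  using dispersed_iff_strictly[OF assms] weakly_iff_strongly[OF assms(1), of E]
    gap_open_dispersed[OF assms(1)] by blast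

end
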